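(* Let $q_1$ and $q_2$ be well-formed PIFO trees. If $q_1 \preceq q_2$, then $\mathsf{flush}(q_1) = \mathsf{flush}(q_2)$.
   Context: Fix a set $\mathsf{Pkt}$ of packets and a totally ordered set $\mathsf{Rk}$ of ranks (smaller is more favorable). PIFOs: for a set $S$, a PIFO over $S$ is a finite sequence of pairs $(s,r)\in S\times\mathsf{Rk}$ in insertion order; $\mathsf{PIFO}(S)$ is the set of these. $\mathsf{push}_{\mathsf{PIFO}}(p,s,r)$ appends $(s,r)$. $\mathsf{pop}_{\mathsf{PIFO}}(p)$ is undefined if $p$ is empty; otherwise it removes the entry of minimal rank (earliest-inserted among ties) and returns $(s,p')$. $|p|$ is the number of entries, $|p|_s$ the number with element $s$. Topologies: $\mathsf{Topo}$ is the smallest set with $*\in\mathsf{Topo}$ and $\mathsf{Node}(\vec t)\in\mathsf{Topo}$ for $n\in\mathbb{N}$, $\vec t\in\mathsf{Topo}^n$. PIFO trees: $\mathsf{Leaf}(p)\in\mathsf{PIFOTree}( * )$ for $p\in\mathsf{PIFO}(\mathsf{Pkt})$; $\mathsf{Internal}(\vec q,p)\in\mathsf{PIFOTree}(\mathsf{Node}(\vec t))$ whenever $\vec t\in\mathsf{Topo}^n$, $p\in\mathsf{PIFO}(\{1,\dots,n\})$, $\vec q[i]\in\mathsf{PIFOTree}(\vec t[i])$. $\vec q[q'/i]$ replaces the $i$-th entry by $q'$. pop (partial): $\mathsf{pop}(\mathsf{Leaf}(p))=(pkt,\mathsf{Leaf}(p'))$ if $\mathsf{pop}_{\mathsf{PIFO}}(p)=(pkt,p')$;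 $\mathsf{pop}(\mathsf{Internal}(\vec q,p))=(pkt,\mathsf{Internal}(\vec q[q'/i],p'))$ if $\mathsf{pop}_{\mathsf{PIFO}}(p)=(i,p')$ and $\mathsf{pop}(\vec q[i])=(pkt,q')$; undefined otherwise. Paths: $\mathsf{Path}( * )=\mathsf{Rk}$; $\mathsf{Path}(\mathsf{Node}(\vec t))$ consists of $(i,r)::pt$ with $1\le i\le n$, $r\in\mathsf{Rk}$, $pt\in\mathsf{Path}(\vec t[i])$. push: $\mathsf{push}(\mathsf{Leaf}(p),pkt,r)=\mathsf{Leaf}(\mathsf{push}_{\mathsf{PIFO}}(p,pkt,r))$; $\mathsf{push}(\mathsf{Internal}(\vec q,p),pkt,(i,r)::pt)=\mathsf{Internal}(\vec q[\mathsf{push}(\vec q[i],pkt,pt)/i],\mathsf{push}_{\mathsf{PIFO}}(p,i,r))$. Size: $|\mathsf{Leaf}(p)|=|p|$, $|\mathsf{Internal}(\vec q,p)|=\sum_i|\vec q[i]|$. Well-formedness: $\vdash\mathsf{Leaf}(p)$ always; $\vdash\mathsf{Internal}(\vec q,p)$ iff for all $i$, $\vdash\vec q[i]$ and $|p|_i=|\vec q[i]|$. Flush: for well-formed $q$, by induction on $|q|$: $\mathsf{flush}(q)=\epsilon$ (empty word) if $|q|=0$, and $\mathsf{flush}(q)=\mathsf{flush}(q')\cdot pkt$ if $|q|>0$ and $\mathsf{pop}(q)=(pkt,q')$. Simulation: for $q_1\in\mathsf{PIFOTree}(t_1)$, $q_2\in\mathsf{PIFOTree}(t_2)$, a relation $R\subseteq\mathsf{PIFOTree}(t_1)\times\mathsf{PIFOTree}(t_2)$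 is a simulation if for all $pkt$ and $u_1\mathrel{R}u_2$: (1) if $\mathsf{pop}(u_1)$ is undefined so is $\mathsf{pop}(u_2)$; (2) if $\mathsf{pop}(u_1)=(pkt,u_1')$ then $\mathsf{pop}(u_2)=(pkt,u_2')$ with $u_1'\mathrel{R}u_2'$; (3) for every $pt_1\in\mathsf{Path}(t_1)$ there is $pt_2\in\mathsf{Path}(t_2)$ with $\mathsf{push}(u_1,pkt,pt_1)\mathrel{R}\mathsf{push}(u_2,pkt,pt_2)$. $q_1\preceq q_2$ means some simulation relates $q_1$ and $q_2$. *)

theory Defs
  imports Main
begin

text \<open>A PIFO over S with ranks in 'r is a list of (element, rank) pairs in insertion order.\<close>
type_synonym ('s, 'r) pifo = "('s \<times> 'r) list"

definition pifo_push :: "('s, 'r) pifo \<Rightarrow> 's \<Rightarrow> 'r \<Rightarrow> ('s, 'r) pifo" where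
  "pifo_push p s r = p @ [(s, r)]"

definition pifo_pop :: "('s, 'r::linorder) pifo \<Rightarrow> ('s \<times> ('s, 'r) pifo) option" where
  "pifo_pop p =
     (if p = [] then None
      else (let m = Min (snd ` set p);
                k = (LEAST i. i < length p \<and> snd (p ! i) = m)
            in Some (fst (p ! k), take k p @ drop (Suc k) p)))"

definition pifo_count :: "('s, 'r) pifo \<Rightarrow> 's \<Rightarrow> nat" where
  "pifo_count p s = length (filter (\<lambda>e. fst e = s) p)"

datatype topo = Star | Node "topo list"

text \<open>Children are indexed 1..n as in the paper; child i is stored at list position i-1.\<close>
datatype ('p, 'r) ptree = Leaf "('p, 'r) pifo" | Internal "('p, 'r) ptree list" "(nat, 'r) pifo"

fun has_topo :: "('p, 'r) ptree \<Rightarrow> topo \<Rightarrow> bool" where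
  "has_topo (Leaf p) Star = True"
| "has_topo (Internal qs p) (Node ts) =
     (list_all2 has_topo qs ts
      \<and> (\<forall>e \<in> set p. 1 \<le> fst e \<and> fst e \<le> length ts))"
| "has_topo _ _ = False"

datatype 'r path = PRk 'r | PStep nat 'r "'r path"

fun is_path :: "topo \<Rightarrow> 'r path \<Rightarrow> bool" where
  "is_path Star (PRk r) = True"
| "is_path (Node ts) (PStep i r pt) = (1 \<le> i \<and> i \<le> length ts \<and> is_path (ts ! (i - 1)) pt)"
| "is_path _ _ = False"

fun push :: "('p, 'r) ptree \<Rightarrow> 'p \<Rightarrow> 'r path \<Rightarrow> ('p, 'r) ptree" where
  "push (Leaf p) pkt (PRk r) = Leaf (pifo_push p pkt r)"
| "push (Internal qs p) pkt (PStep i r pt) =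
     Internal (qs[i - 1 := push (qs ! (i - 1)) pkt pt]) (pifo_push p i r)"
| "push q _ _ = q" \<comment> \<open>ill-typed case, never used\<close>

function pop :: "('p, 'r::linorder) ptree \<Rightarrow> ('p \<times> ('p, 'r) ptree) option" where
  "pop (Leaf p) = (case pifo_pop p of None \<Rightarrow> None | Some (pkt, p') \<Rightarrow> Some (pkt, Leaf p'))"
| "pop (Internal qs p) =
     (case pifo_pop p of None \<Rightarrow> None
      | Some (i, p') \<Rightarrow>
          (if 1 \<le> i \<and> i \<le> length qs then
             (case pop (qs ! (i - 1)) of None \<Rightarrow> None
              | Some (pkt, q') \<Rightarrow> Some (pkt, Internal (qs[i - 1 := q']) p'))
           else None))"
  by pat_completeness auto
termination
proof (relation "measure size")
  fix qs :: "('p, 'r) ptree list" and p :: "(nat, 'r) pifo" and x y i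
  assume "1 \<le> i \<and> i \<le> length qs"
  then have "qs ! (i - 1) \<in> set qs" by (intro nth_mem) linarith
  then show "(qs ! (i - 1), Internal qs p) \<in> measure size"
    using size_list_estimation'[of _ qs "size (qs ! (i - 1))" size] by (simp add: less_Suc_eq_le trans_le_add1)
qed simp

fun tsize :: "('p, 'r) ptree \<Rightarrow> nat" where
  "tsize (Leaf p) = length p"
| "tsize (Internal qs p) = sum_list (map tsize qs)"

fun wf_tree :: "('p, 'r) ptree \<Rightarrow> bool" where
  "wf_tree (Leaf p) = True"
| "wf_tree (Internal qs p) =
     (list_all wf_tree qs \<and> (\<forall>i < length qs. pifo_count p (Suc i) = tsize (qs ! i)))"

text \<open>flush, defined (for well-formed q) by recursion on |q|: flush q = flush q' . pkt
  where pop q = (pkt, q'). We use |q| as fuel; for well-formed q each pop decreases |q| by one.\<close>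
fun flush_fuel :: "nat \<Rightarrow> ('p, 'r::linorder) ptree \<Rightarrow> 'p list" where
  "flush_fuel 0 q = []"
| "flush_fuel (Suc n) q = (case pop q of None \<Rightarrow> [] | Some (pkt, q') \<Rightarrow> flush_fuel n q' @ [pkt])"

definition flush :: "('p, 'r::linorder) ptree \<Rightarrow> 'p list" where
  "flush q = flush_fuel (tsize q) q"

definition simulation :: "topo \<Rightarrow> topo \<Rightarrow> (('p, 'r::linorder) ptree \<Rightarrow> ('p, 'r) ptree \<Rightarrow> bool) \<Rightarrow> bool" where
  "simulation t1 t2 R \<longleftrightarrow>
     (\<forall>u1 u2. R u1 u2 \<longrightarrow> has_topo u1 t1 \<and> has_topo u2 t2) \<and>
     (\<forall>u1 u2. R u1 u2 \<longrightarrow>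
        (pop u1 = None \<longrightarrow> pop u2 = None) \<and>
        (\<forall>pkt u1'. pop u1 = Some (pkt, u1') \<longrightarrow>
            (\<exists>u2'. pop u2 = Some (pkt, u2') \<and> R u1' u2')) \<and>
        (\<forall>pkt pt1. is_path t1 pt1 \<longrightarrow>
            (\<exists>pt2. is_path t2 pt2 \<and> R (push u1 pkt pt1) (push u2 pkt pt2))))"

definition simulated_by :: "topo \<Rightarrow> topo \<Rightarrow> ('p, 'r::linorder) ptree \<Rightarrow> ('p, 'r) ptree \<Rightarrow> bool" where
  "simulated_by t1 t2 q1 q2 \<longleftrightarrow> (\<exists>R. simulation t1 t2 R \<and> R q1 q2)"

end

theory Submission
  imports Defs
begin

lemma pifo_pop_None_iff: "pifo_pop p = None \<longleftrightarrow> p = []"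
  by (simp add: pifo_pop_def Let_def)

lemma pifo_pop_SomeD:
  assumes "pifo_pop p = Some (s, p')"
  shows "\<exists>k<length p. s = fst (p ! k) \<and> p' = take k p @ drop (Suc k) p"
proof -
  have ne: "p \<noteq> []" using assms by (auto simp: pifo_pop_def)
  define m where "m = Min (snd ` set p)"
  define k where "k = (LEAST i. i < length p \<and> snd (p ! i) = m)"
  have "m \<in> snd ` set p" unfolding m_def using ne by (intro Min_in) auto
  then obtain e where "e \<in> set p" "snd e = m" by auto
  then obtain i where "i < length p" "snd (p ! i) = m" by (auto simp: in_set_conv_nth)
  then have "k < length p \<and> snd (p ! k) = m" unfolding k_def by (rule LeastI[where k = i, OF conjI])
  moreover have "pifo_pop p = Some (fst (p ! k), take k p @ drop (Suc k) p)"
    using ne unfolding pifo_pop_def Let_def m_def[symmetric] k_def[symmetric] by simp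
  ultimately show ?thesis using assms by auto
qed

lemma pifo_count_append: "pifo_count (a @ b) x = pifo_count a x + pifo_count b x"
  by (simp add: pifo_count_def)

lemma pifo_count_split:
  assumes "k < length p"
  shows "pifo_count p x = pifo_count (take k p @ drop (Suc k) p) x + (if fst (p ! k) = x then 1 else 0)"
proof -
  have "p = take k p @ [p ! k] @ drop (Suc k) p" using assms by (simp add: id_take_nth_drop)
  then have "pifo_count p x = pifo_count (take k p @ [p ! k] @ drop (Suc k) p) x" by simp
  also have "\<dots> = pifo_count (take k p) x + (if fst (p ! k) = x then 1 else 0) + pifo_count (drop (Suc k) p) x"
    by (simp add: pifo_count_append) (simp add: pifo_count_def)
  finally show ?thesis by (simp add: pifo_count_append)
qed

lemma set_take_drop_sub: "set (take k p @ drop (Suc k) p) \<subseteq> set p"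
  by (metis Un_subset_iff set_append set_drop_subset set_take_subset)

lemma sum_list_upd:
  fixes f :: "'a \<Rightarrow> nat"
  assumes "j < length qs"
  shows "sum_list (map f (qs[j := c])) + f (qs ! j) = sum_list (map f qs) + f c"
proof -
  have a: "qs = take j qs @ qs ! j # drop (Suc j) qs" using assms by (simp add: id_take_nth_drop)
  have b: "qs[j := c] = take j qs @ c # drop (Suc j) qs" using assms by (simp add: upd_conv_take_nth_drop)
  have "sum_list (map f qs) = sum_list (map f (take j qs @ qs ! j # drop (Suc j) qs))"
    using a by (rule arg_cong)
  then show ?thesis by (subst b) simp
qed

lemma pop_wf:
  "pop q = Some (pkt, q') \<Longrightarrow> has_topo q t \<Longrightarrow> wf_tree q \<Longrightarrow>
   has_topo q' t \<and> wf_tree q' \<and> Suc (tsize q') = tsize q"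
proof (induction q arbitrary: pkt q' t rule: pop.induct)
  case (1 p)
  then obtain p' where pp: "pifo_pop p = Some (pkt, p')" "q' = Leaf p'"
    by (auto split: option.splits)
  from pifo_pop_SomeD[OF pp(1)] obtain k where "k < length p" "p' = take k p @ drop (Suc k) p" by auto
  moreover have "t = Star" using 1 by (cases t) auto
  ultimately show ?case using pp by simp
next
  case (2 qs p)
  obtain ts where t: "t = Node ts" using "2.prems" by (cases t) auto
  from "2.prems" obtain i p' where pp: "pifo_pop p = Some (i, p')" by (auto split: option.splits)
  have rng: "1 \<le> i \<and> i \<le> length qs" using "2.prems" pp by (auto split: if_splits)
  from "2.prems" pp rng obtain c' where pc: "pop (qs ! (i - 1)) = Some (pkt, c')"
    and q': "q' = Internal (qs[i - 1 := c']) p'" by (auto split: option.splits)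
  have len: "length qs = length ts" using "2.prems" t by (auto dest: list_all2_lengthD)
  have ht: "has_topo (qs ! (i - 1)) (ts ! (i - 1))" using "2.prems" t rng len
    by (auto intro: list_all2_nthD)
  have wc: "wf_tree (qs ! (i - 1))" using "2.prems" rng by (auto simp: list_all_iff)
  from "2.IH"[OF pp refl rng pc ht wc] have IH:
    "has_topo c' (ts ! (i - 1))" "wf_tree c'" "Suc (tsize c') = tsize (qs ! (i - 1))" by auto
  from pifo_pop_SomeD[OF pp] obtain k where k: "k < length p" "i = fst (p ! k)"
    "p' = take k p @ drop (Suc k) p" by auto
  have "has_topo q' t"
  proof -
    have l2: "list_all2 has_topo qs ts" using "2.prems"(2) t by simp
    have "list_all2 has_topo (qs[i - 1 := c']) ts"
    proof -
      have "ts = ts[i - 1 := ts ! (i - 1)]" by simp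
      moreover have "list_all2 has_topo (qs[i - 1 := c']) (ts[i - 1 := ts ! (i - 1)])"
        by (rule list_all2_update_cong[OF l2 IH(1)])
      ultimately show ?thesis by simp
    qed
    moreover have "\<forall>e \<in> set p'. 1 \<le> fst e \<and> fst e \<le> length ts"
      using "2.prems"(2) t set_take_drop_sub[of k p] k(3) by auto
    ultimately show ?thesis using q' t by simp
  qed
  moreover have "wf_tree q'"
  proof -
    have "list_all wf_tree (qs[i - 1 := c'])" using "2.prems" IH(2)
    proof -
      have "set (qs[i - 1 := c']) \<subseteq> insert c' (set qs)" by (rule set_update_subset_insert)
      moreover have "list_all wf_tree qs" using "2.prems"(3) by simp
      ultimately show ?thesis using IH(2) by (auto simp: list_all_iff)
    qed
    moreover have "pifo_count p' (Suc j) = tsize (qs[i - 1 := c'] ! j)" if "j < length qs" for j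
    proof -
      have "pifo_count p (Suc j) = tsize (qs ! j)" using "2.prems" that by auto
      moreover note pifo_count_split[OF k(1), of "Suc j"]
      ultimately show ?thesis
      proof (cases "j = i - 1")
        case True
        then have "Suc j = i" using rng by arith
        then show ?thesis using True that IH(3) k
            \<open>pifo_count p (Suc j) = tsize (qs ! j)\<close> pifo_count_split[OF k(1), of "Suc j"] by simp
      next
        case False
        then have "fst (p ! k) \<noteq> Suc j" using rng k(2) by arith
        then show ?thesis using False that k
            \<open>pifo_count p (Suc j) = tsize (qs ! j)\<close> pifo_count_split[OF k(1), of "Suc j"] by simp
      qed
    qed
    ultimately show ?thesis using q' by simp
  qed
  moreover have "Suc (tsize q') = tsize (Internal qs p)"
  proof -
    have "i - 1 < length qs" using rng by arith
    then have "sum_list (map tsize (qs[i - 1 := c'])) + tsize (qs ! (i - 1)) = sum_list (map tsize qs) + tsize c'"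
      by (rule sum_list_upd)
    then show ?thesis using IH(3) q' by simp
  qed
  ultimately show ?case by blast
qed

lemma pop_ne:
  "has_topo q t \<Longrightarrow> wf_tree q \<Longrightarrow> 0 < tsize q \<Longrightarrow> \<exists>pkt q'. pop q = Some (pkt, q')"
proof (induction q arbitrary: t rule: pop.induct)
  case (1 p)
  then obtain s p' where "pifo_pop p = Some (s, p')"
    using pifo_pop_None_iff[of p] by (cases "pifo_pop p") auto
  then show ?case by auto
next
  case (2 qs p)
  obtain ts where t: "t = Node ts" using "2.prems" by (cases t) auto
  have len: "length qs = length ts" using "2.prems" t by (auto dest: list_all2_lengthD)
  have "\<exists>x \<in> set qs. 0 < tsize x"
  proof (rule ccontr)
    assume "\<not> ?thesis"
    then have "\<forall>x\<in>set qs. tsize x = 0" by auto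
    then have "sum_list (map tsize qs) = 0" by (induction qs) auto
    moreover have "tsize (Internal qs p) = sum_list (map tsize qs)" by simp
    ultimately show False using "2.prems"(3) by linarith
  qed
  then obtain j where j: "j < length qs" "0 < tsize (qs ! j)" by (auto simp: in_set_conv_nth)
  have "pifo_count p (Suc j) > 0" using "2.prems" j by auto
  then have "p \<noteq> []" by (auto simp: pifo_count_def)
  then obtain i p' where pp: "pifo_pop p = Some (i, p')"
    using pifo_pop_None_iff[of p] by (cases "pifo_pop p") auto
  from pifo_pop_SomeD[OF pp] obtain k where k: "k < length p" "i = fst (p ! k)"
    "p' = take k p @ drop (Suc k) p" by auto
  have "p ! k \<in> set p" using k by simp
  then have rng: "1 \<le> i \<and> i \<le> length qs" using "2.prems" t k len by auto
  have ht: "has_topo (qs ! (i - 1)) (ts ! (i - 1))" using "2.prems" t rng len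
    by (auto intro: list_all2_nthD)
  have wc: "wf_tree (qs ! (i - 1))" using "2.prems" rng by (auto simp: list_all_iff)
  have "pifo_count p i > 0" using pifo_count_split[OF k(1), of i] k by simp
  moreover have "i - 1 < length qs" "Suc (i - 1) = i" using rng by arith+
  ultimately have "tsize (qs ! (i - 1)) > 0" using "2.prems"(2) by (metis wf_tree.simps(2))
  from "2.IH"[OF pp refl rng ht wc this] obtain pkt c' where "pop (qs ! (i - 1)) = Some (pkt, c')" by auto
  then show ?case using pp rng by auto
qed

lemma flush_fuel_stable:
  "has_topo q t \<Longrightarrow> wf_tree q \<Longrightarrow> tsize q \<le> n \<Longrightarrow> flush_fuel n q = flush_fuel (tsize q) q"
proof (induction n arbitrary: q)
  case 0
  then show ?case by simp
next
  case (Suc n)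
  show ?case
  proof (cases "tsize q")
    case 0
    have "pop q = None"
    proof (rule ccontr)
      assume "pop q \<noteq> None"
      then obtain pkt q' where "pop q = Some (pkt, q')" by auto
      from pop_wf[OF this Suc.prems(1,2)] 0 show False by simp
    qed
    then show ?thesis using 0 by simp
  next
    case (Suc m)
    from pop_ne[OF Suc.prems(1,2)] Suc obtain pkt q' where pq: "pop q = Some (pkt, q')" by auto
    from pop_wf[OF pq Suc.prems(1,2)] Suc have w: "has_topo q' t" "wf_tree q'" "tsize q' = m" by auto
    have "flush_fuel n q' = flush_fuel m q'" using Suc.IH[OF w(1,2)] w(3) Suc.prems(3) Suc by simp
    then show ?thesis using pq Suc by simp
  qed
qed

lemma sim_fuel:
  assumes "simulation t1 t2 R"
  shows "R u1 u2 \<Longrightarrow> flush_fuel n u1 = flush_fuel n u2"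
proof (induction n arbitrary: u1 u2)
  case 0
  then show ?case by simp
next
  case (Suc n)
  show ?case
  proof (cases "pop u1")
    case None
    then have "pop u2 = None" using assms Suc.prems unfolding simulation_def by blast
    then show ?thesis using None by simp
  next
    case (Some a)
    then obtain pkt u1' where p1: "pop u1 = Some (pkt, u1')" by (cases a) auto
    then obtain u2' where "pop u2 = Some (pkt, u2')" "R u1' u2'"
      using assms Suc.prems unfolding simulation_def by blast
    then show ?thesis using p1 Suc.IH by simp
  qed
qed

theorem lemma4p6:
  fixes q1 q2 :: "('p, 'r::linorder) ptree" and t1 t2 :: topo
  assumes "has_topo q1 t1" and "has_topo q2 t2"
    and "wf_tree q1" and "wf_tree q2"
    and "simulated_by t1 t2 q1 q2"
  shows "flush q1 = flush q2"
proof -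
  obtain R where R: "simulation t1 t2 R" "R q1 q2" using assms(5) unfolding simulated_by_def by blast
  define N where "N = max (tsize q1) (tsize q2)"
  have "flush q1 = flush_fuel N q1"
    unfolding flush_def using flush_fuel_stable[OF assms(1,3), of N] by (simp add: N_def)
  also have "\<dots> = flush_fuel N q2" using sim_fuel[OF R] .
  also have "\<dots> = flush q2"
    unfolding flush_def using flush_fuel_stable[OF assms(2,4), of N] by (simp add: N_def)
  finally show ?thesis .
qed

end
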